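(* Let $k$ be an étale algebra over $\mathbb{Q}$ with maximal order $\mathcal{O}_k$, and let $\mathcal{O}'\subset\mathcal{O}\subset\mathcal{O}_k$ be orders with conductors $\mathfrak{f}'$ and $\mathfrak{f}$ respectively. Then $\mathfrak{f}'\subset\mathfrak{f}$. If $p$ is a prime number such that $p\mid N(\mathfrak{f})$ and $p\nmid(\mathcal{O}:\mathcal{O}')$, then $\mathfrak{f}'_p=\mathfrak{f}_p$.
   Context: An étale algebra is $k=k_1\oplus\cdots\oplus k_s$ with number fields $k_i$; $\mathcal{O}_k=\oplus\mathcal{O}_{k_i}$. An order is a subring of $\mathcal{O}_k$ with unit of finite index. The conductor of an order $\mathcal{O}$ is the largest $\mathcal{O}_k$-ideal contained in $\mathcal{O}$. For an integral invertible $\mathcal{O}_k$-ideal $\mathfrak{a}=\oplus\mathfrak{a}_i$, its norm is $N(\mathfrak{a})=\prod N(\mathfrak{a}_i)=(\mathcal{O}_k:\mathfrak{a})$, and its $p$-part $\mathfrak{a}_p$ is $\oplus_i\mathfrak{a}_{i,p}$, where $\mathfrak{a}_{i,p}$ is the product of the prime-power factors of $\mathfrak{a}_i$ at primes above $p$; equivalently $\mathfrak{a}_p=\mathfrak{a}+p^a\mathcal{O}_k$ for all sufficiently large $a$. *)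

theory Defs
  imports "HOL-Computational_Algebra.Computational_Algebra"
begin

text \<open>A number field, realised (via a complex embedding) as a subfield of the complex
numbers that is finite-dimensional over the rationals.\<close>
definition number_field :: "complex set \<Rightarrow> bool" where
  "number_field K \<longleftrightarrow>
     0 \<in> K \<and> 1 \<in> K \<and>
     (\<forall>x\<in>K. \<forall>y\<in>K. x + y \<in> K \<and> x - y \<in> K \<and> x * y \<in> K) \<and>
     (\<forall>x\<in>K. x \<noteq> 0 \<longrightarrow> inverse x \<in> K) \<and>
     (\<exists>B. finite B \<and> B \<subseteq> K \<and>
        (\<forall>x\<in>K. \<exists>q. (\<forall>b\<in>B. q b \<in> \<rat>) \<and> x = (\<Sum>b\<in>B. q b * b)))"

text \<open>The etale algebra k = K_0 + ... + K_(s-1): elements are tuples indexed by i < s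
(with value 0 outside), operations componentwise.\<close>
definition etale :: "nat \<Rightarrow> (nat \<Rightarrow> complex set) \<Rightarrow> (nat \<Rightarrow> complex) set" where
  "etale s K = {x. (\<forall>i<s. x i \<in> K i) \<and> (\<forall>i\<ge>s. x i = 0)}"

definition max_order :: "nat \<Rightarrow> (nat \<Rightarrow> complex set) \<Rightarrow> (nat \<Rightarrow> complex) set" where
  "max_order s K = {x \<in> etale s K. \<forall>i<s. algebraic_int (x i)}"

definition one_e :: "nat \<Rightarrow> nat \<Rightarrow> complex" where
  "one_e s = (\<lambda>i. if i < s then 1 else 0)"

definition add_e :: "(nat \<Rightarrow> complex) \<Rightarrow> (nat \<Rightarrow> complex) \<Rightarrow> nat \<Rightarrow> complex" where
  "add_e x y = (\<lambda>i. x i + y i)"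

definition mul_e :: "(nat \<Rightarrow> complex) \<Rightarrow> (nat \<Rightarrow> complex) \<Rightarrow> nat \<Rightarrow> complex" where
  "mul_e x y = (\<lambda>i. x i * y i)"

definition neg_e :: "(nat \<Rightarrow> complex) \<Rightarrow> nat \<Rightarrow> complex" where
  "neg_e x = (\<lambda>i. - x i)"

definition cosets :: "(nat \<Rightarrow> complex) set \<Rightarrow> (nat \<Rightarrow> complex) set \<Rightarrow> (nat \<Rightarrow> complex) set set" where
  "cosets A B = {{add_e x b | b. b \<in> B} | x. x \<in> A}"

definition index :: "(nat \<Rightarrow> complex) set \<Rightarrow> (nat \<Rightarrow> complex) set \<Rightarrow> nat" where
  "index A B = card (cosets A B)"

definition is_order :: "nat \<Rightarrow> (nat \<Rightarrow> complex set) \<Rightarrow> (nat \<Rightarrow> complex) set \<Rightarrow> bool" where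
  "is_order s K R \<longleftrightarrow>
     R \<subseteq> max_order s K \<and> one_e s \<in> R \<and>
     (\<forall>x\<in>R. \<forall>y\<in>R. add_e x y \<in> R \<and> mul_e x y \<in> R \<and> neg_e x \<in> R) \<and>
     finite (cosets (max_order s K) R)"

definition Ok_ideal :: "nat \<Rightarrow> (nat \<Rightarrow> complex set) \<Rightarrow> (nat \<Rightarrow> complex) set \<Rightarrow> bool" where
  "Ok_ideal s K I \<longleftrightarrow>
     I \<subseteq> max_order s K \<and> (\<lambda>i. 0) \<in> I \<and>
     (\<forall>x\<in>I. \<forall>y\<in>I. add_e x y \<in> I \<and> neg_e x \<in> I) \<and>
     (\<forall>x\<in>I. \<forall>r\<in>max_order s K. mul_e r x \<in> I)"

definition conductor :: "nat \<Rightarrow> (nat \<Rightarrow> complex set) \<Rightarrow> (nat \<Rightarrow> complex) set \<Rightarrow> (nat \<Rightarrow> complex) set" where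
  "conductor s K R = \<Union>{I. Ok_ideal s K I \<and> I \<subseteq> R}"

definition ideal_norm :: "nat \<Rightarrow> (nat \<Rightarrow> complex set) \<Rightarrow> (nat \<Rightarrow> complex) set \<Rightarrow> nat" where
  "ideal_norm s K I = index (max_order s K) I"

text \<open>a + p^n O_k; the p-part of a is this set for all sufficiently large n.\<close>
definition ppart_approx :: "nat \<Rightarrow> (nat \<Rightarrow> complex set) \<Rightarrow> (nat \<Rightarrow> complex) set \<Rightarrow> nat \<Rightarrow> nat \<Rightarrow> (nat \<Rightarrow> complex) set" where
  "ppart_approx s K I p n =
     {add_e x (\<lambda>i. of_nat (p ^ n) * y i) | x y. x \<in> I \<and> y \<in> max_order s K}"

end

theory Submission
  imports Defs "Jordan_Normal_Form.Char_Poly" "HOL-Library.Function_Algebras"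
begin


definition zspan :: "'a set \<Rightarrow> ('a \<Rightarrow> complex) \<Rightarrow> complex \<Rightarrow> bool" where
  "zspan S v z \<longleftrightarrow> (\<exists>c::'a \<Rightarrow> int. z = (\<Sum>k\<in>S. of_int (c k) * v k))"

lemma eig_alg_int:
  fixes v :: "nat \<Rightarrow> complex"
  assumes "j0 < n" "v j0 \<noteq> 0"
    and "\<forall>j<n. \<exists>c::nat\<Rightarrow>int. x * v j = (\<Sum>k<n. of_int (c k) * v k)"
  shows "algebraic_int x"
proof -
  from assms(3) obtain C where C: "\<And>j. j < n \<Longrightarrow> x * v j = (\<Sum>k<n. of_int (C j k) * v k)"
    by metis
  define A :: "int mat" where "A = mat n n (\<lambda>(j,k). C j k)"
  define vv where "vv = vec n v"
  have Ac: "A \<in> carrier_mat n n" by (simp add: A_def)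
  have Ac': "map_mat of_int A \<in> carrier_mat n n" using Ac by simp
  have ev: "map_mat (of_int :: int \<Rightarrow> complex) A *\<^sub>v vv = x \<cdot>\<^sub>v vv"
  proof (rule eq_vecI)
    fix i assume "i < dim_vec (x \<cdot>\<^sub>v vv)"
    then have i: "i < n" by (simp add: vv_def)
    have "(map_mat of_int A *\<^sub>v vv) $ i = (\<Sum>k\<in>{0..<n}. of_int (C i k) * v k)"
      using i by (simp add: A_def vv_def scalar_prod_def row_def)
    also have "\<dots> = x * v i" using C[OF i] by (simp add: atLeast0LessThan)
    finally show "(map_mat of_int A *\<^sub>v vv) $ i = (x \<cdot>\<^sub>v vv) $ i" using i by (simp add: vv_def)
  qed (simp add: vv_def A_def)
  have "vv \<noteq> 0\<^sub>v n"
  proof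
    assume "vv = 0\<^sub>v n"
    then have "vv $ j0 = 0" using assms(1) by simp
    then show False using assms by (simp add: vv_def)
  qed
  then have "eigenvector (map_mat of_int A) vv x"
    unfolding eigenvector_def using ev Ac' by (simp add: vv_def)
  then have "eigenvalue (map_mat of_int A) x" unfolding eigenvalue_def by blast
  then have "poly (char_poly (map_mat of_int A)) x = 0"
    using eigenvalue_root_char_poly[OF Ac', of x] by blast
  then have "poly (map_poly of_int (char_poly A)) x = 0"
    using of_int_hom.char_poly_hom[OF Ac] by metis
  moreover have "lead_coeff (char_poly A) = 1"
    using degree_monic_char_poly[OF Ac] by simp
  ultimately show ?thesis unfolding algebraic_int_altdef_ipoly by blast
qed

lemma eig_alg_int_set:
  fixes v :: "'a \<Rightarrow> complex"
  assumes "finite S" "s0 \<in> S" "v s0 \<noteq> 0" "\<forall>s\<in>S. zspan S v (x * v s)"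
  shows "algebraic_int x"
proof -
  obtain h where h: "bij_betw h {0..<card S} S" using ex_bij_betw_nat_finite[OF assms(1)] by blast
  define n where "n = card S"
  obtain j0 where j0: "j0 < n" "h j0 = s0" using h assms(2) unfolding n_def bij_betw_def by force
  show ?thesis
  proof (rule eig_alg_int[of j0 n "v \<circ> h"])
    show "j0 < n" by fact
    show "(v \<circ> h) j0 \<noteq> 0" using j0 assms(3) by simp
    show "\<forall>j<n. \<exists>c::nat\<Rightarrow>int. x * (v \<circ> h) j = (\<Sum>k<n. of_int (c k) * (v \<circ> h) k)"
    proof (intro allI impI)
      fix j assume "j < n"
      then have "h j \<in> S" using h unfolding n_def bij_betw_def by auto
      then obtain c where c: "x * v (h j) = (\<Sum>k\<in>S. of_int (c k) * v k)"
        using assms(4) unfolding zspan_def by blast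
      also have "\<dots> = (\<Sum>k\<in>{0..<n}. of_int (c (h k)) * v (h k))"
        using sum.reindex_bij_betw[OF h, of "\<lambda>k. of_int (c k) * v k"] unfolding n_def by simp
      finally show "\<exists>c::nat\<Rightarrow>int. x * (v \<circ> h) j = (\<Sum>k<n. of_int (c k) * (v \<circ> h) k)"
        by (intro exI[of _ "c \<circ> h"]) (simp add: atLeast0LessThan)
    qed
  qed
qed

lemma zspan_base: "finite S \<Longrightarrow> s \<in> S \<Longrightarrow> zspan S v (v s)"
  unfolding zspan_def
proof (intro exI)
  assume "finite S" "s \<in> S"
  have "(\<Sum>k\<in>S. of_int (if k = s then 1 else 0) * v k) = (\<Sum>k\<in>S. if k = s then v k else 0)"
    by (rule sum.cong) auto
  then show "v s = (\<Sum>k\<in>S. of_int (if k = s then 1 else 0) * v k)"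
    using \<open>finite S\<close> \<open>s \<in> S\<close> by simp
qed

lemma zspan_add: "zspan S v a \<Longrightarrow> zspan S v b \<Longrightarrow> zspan S v (a + b)"
  unfolding zspan_def
proof (elim exE)
  fix c1 c2 assume "a = (\<Sum>k\<in>S. of_int (c1 k) * v k)" "b = (\<Sum>k\<in>S. of_int (c2 k) * v k)"
  then show "\<exists>c. a + b = (\<Sum>k\<in>S. of_int (c k) * v k)"
    by (intro exI[of _ "\<lambda>k. c1 k + c2 k"]) (simp add: sum.distrib distrib_right)
qed

lemma zspan_scale: "zspan S v a \<Longrightarrow> zspan S v (of_int m * a)"
  unfolding zspan_def
proof (elim exE)
  fix c1 assume "a = (\<Sum>k\<in>S. of_int (c1 k) * v k)"
  then show "\<exists>c. of_int m * a = (\<Sum>k\<in>S. of_int (c k) * v k)"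
    by (intro exI[of _ "\<lambda>k. m * c1 k"]) (simp add: sum_distrib_left mult.assoc)
qed

lemma zspan_zero: "zspan S v 0"
  unfolding zspan_def by (rule exI[of _ "\<lambda>_. 0"]) simp

lemma zspan_sum: "finite A \<Longrightarrow> (\<And>a. a \<in> A \<Longrightarrow> zspan S v (f a)) \<Longrightarrow> zspan S v (\<Sum>a\<in>A. f a)"
  by (induction A rule: finite_induct) (auto intro: zspan_add zspan_zero)

lemma monic_deg_pos:
  fixes x :: complex and p :: "int poly"
  assumes "poly (map_poly of_int p) x = 0" "lead_coeff p = 1"
  shows "degree p > 0"
proof (rule ccontr)
  assume "\<not> degree p > 0"
  then have d: "degree p = 0" by simp
  have "0 = (\<Sum>k\<le>degree p. of_int (coeff p k) * x ^ k)"
    using assms(1) by (simp add: poly_altdef degree_map_poly coeff_map_poly)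
  also have "\<dots> = 1" using assms(2) d by simp
  finally show False by simp
qed

lemma monic_pow_span:
  fixes x :: complex and p :: "int poly"
  assumes "poly (map_poly of_int p) x = 0" "lead_coeff p = 1"
  shows "zspan {..<degree p} (\<lambda>k. x ^ k) (x ^ e)"
proof (induction e rule: less_induct)
  case (less e)
  define d where "d = degree p"
  show ?case
  proof (cases "e < d")
    case True then show ?thesis by (intro zspan_base) (auto simp: d_def)
  next
    case False
    have "0 = (\<Sum>k\<le>d. of_int (coeff p k) * x ^ k)"
      using assms(1) by (simp add: poly_altdef degree_map_poly d_def coeff_map_poly)
    also have "\<dots> = (\<Sum>k<d. of_int (coeff p k) * x ^ k) + x ^ d"
      using assms(2) by (simp add: lessThan_Suc_atMost[symmetric] d_def)
    finally have xd: "x ^ d = - (\<Sum>k<d. of_int (coeff p k) * x ^ k)"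
      by (simp add: eq_neg_iff_add_eq_0 add.commute)
    have "x ^ e = x ^ (e - d) * x ^ d" using False by (simp flip: power_add)
    also have "\<dots> = (\<Sum>k<d. of_int (- coeff p k) * x ^ (e - d + k))"
      by (simp add: xd sum_distrib_left power_add algebra_simps sum_negf)
    finally have eq: "x ^ e = (\<Sum>k<d. of_int (- coeff p k) * x ^ (e - d + k))" .
    have d0: "d > 0" using monic_deg_pos[OF assms] by (simp add: d_def)
    show ?thesis unfolding eq d_def[symmetric]
    proof (intro zspan_sum zspan_scale)
      fix k assume "k \<in> {..<d}"
      then have "e - d + k < e" using False d0 by auto
      then show "zspan {..<d} ((^) x) (x ^ (e - d + k))" using less by (simp add: d_def)
    qed simp
  qed
qed

lemma algebraic_int_add_c:
  fixes x y :: complex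
  assumes "algebraic_int x" "algebraic_int y"
  shows "algebraic_int (x + y)"
proof -
  obtain p where p: "poly (map_poly of_int p) x = 0" "lead_coeff p = 1"
    using assms(1) unfolding algebraic_int_altdef_ipoly by blast
  obtain q where q: "poly (map_poly of_int q) y = 0" "lead_coeff q = 1"
    using assms(2) unfolding algebraic_int_altdef_ipoly by blast
  define d where "d = degree p"
  define e where "e = degree q"
  have d0: "d > 0" using monic_deg_pos[OF p] by (simp add: d_def)
  have e0: "e > 0" using monic_deg_pos[OF q] by (simp add: e_def)
  define S where "S = {..<d} \<times> {..<e}"
  define v where "v = (\<lambda>(i,j). x ^ i * y ^ (j::nat))"
  have fS: "finite S" by (simp add: S_def)
  have L1: "zspan S v (z * y ^ j)" if "zspan {..<d} (\<lambda>k. x ^ k) z" "j < e" for z j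
  proof -
    from that(1) obtain c where c: "z = (\<Sum>k<d. of_int (c k) * x ^ k)" unfolding zspan_def by blast
    have "z * y ^ j = (\<Sum>k<d. of_int (c k) * v (k, j))"
      by (simp add: c sum_distrib_right v_def mult.assoc)
    also have "zspan S v \<dots>"
      by (intro zspan_sum zspan_scale zspan_base fS) (use that(2) in \<open>auto simp: S_def\<close>)
    finally show ?thesis .
  qed
  have L2: "zspan S v (x ^ i * z)" if "zspan {..<e} (\<lambda>k. y ^ k) z" "i < d" for z i
  proof -
    from that(1) obtain c where c: "z = (\<Sum>k<e. of_int (c k) * y ^ k)" unfolding zspan_def by blast
    have "x ^ i * z = (\<Sum>k<e. of_int (c k) * v (i, k))"
      by (simp add: c sum_distrib_left v_def mult.left_commute)
    also have "zspan S v \<dots>"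
      by (intro zspan_sum zspan_scale zspan_base fS) (use that(2) in \<open>auto simp: S_def\<close>)
    finally show ?thesis .
  qed
  show ?thesis
  proof (rule eig_alg_int_set[OF fS, of "(0,0)" v])
    show "(0, 0) \<in> S" using d0 e0 by (simp add: S_def)
    show "v (0, 0) \<noteq> 0" by (simp add: v_def)
    show "\<forall>s\<in>S. zspan S v ((x + y) * v s)"
    proof
      fix s assume "s \<in> S"
      then obtain i j where s: "s = (i, j)" "i < d" "j < e" by (auto simp: S_def)
      have "(x + y) * v s = x ^ Suc i * y ^ j + x ^ i * y ^ Suc j"
        by (simp add: s v_def algebra_simps)
      also have "zspan S v \<dots>"
        by (intro zspan_add L1 L2 s monic_pow_span[OF p, folded d_def] monic_pow_span[OF q, folded e_def])
      finally show "zspan S v ((x + y) * v s)" .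
    qed
  qed
qed



lemma coset_index_mult:
  fixes G H :: "(nat \<Rightarrow> complex) set" and y :: "nat \<Rightarrow> complex"
  assumes HG: "H \<subseteq> G" and Gadd: "\<And>a b. a \<in> G \<Longrightarrow> b \<in> G \<Longrightarrow> a + b \<in> G"
    and Hadd: "\<And>a b. a \<in> H \<Longrightarrow> b \<in> H \<Longrightarrow> a + b \<in> H"
    and Hneg: "\<And>a. a \<in> H \<Longrightarrow> - a \<in> H" and H0: "0 \<in> H"
    and fin: "finite {{x + b | b. b \<in> H} | x. x \<in> G}" and y: "y \<in> G"
  shows "of_nat (card {{x + b | b. b \<in> H} | x. x \<in> G}) * y \<in> H"
proof -
  define cs where "cs = (\<lambda>x. {x + b | b. b \<in> H})"
  define C where "C = {cs x | x. x \<in> G}"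
  have CC: "{{x + b | b. b \<in> H} | x. x \<in> G} = C" by (simp add: C_def cs_def)
  have Hdiff: "a - b \<in> H" if "a \<in> H" "b \<in> H" for a b
    using Hadd[OF that(1) Hneg[OF that(2)]] by simp
  have cs_eq: "cs x = cs z \<Longrightarrow> x - z \<in> H" for x z
  proof -
    assume "cs x = cs z"
    moreover have "x \<in> cs x" using H0 unfolding cs_def by (auto intro!: exI[of _ 0])
    ultimately obtain b where "b \<in> H" "x = z + b" unfolding cs_def by auto
    then show ?thesis by simp
  qed
  have eq_cs: "x - z \<in> H \<Longrightarrow> cs x = cs z" for x z
  proof -
    assume d: "x - z \<in> H"
    show ?thesis unfolding cs_def
    proof (intro subset_antisym subsetI)
      fix w assume "w \<in> {x + b |b. b \<in> H}"
      then obtain b where "b \<in> H" "w = x + b" by auto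
      then show "w \<in> {z + b |b. b \<in> H}" using Hadd[OF d \<open>b \<in> H\<close>]
        by (auto intro!: exI[of _ "x - z + b"])
    next
      fix w assume "w \<in> {z + b |b. b \<in> H}"
      then obtain b where "b \<in> H" "w = z + b" by auto
      then show "w \<in> {x + b |b. b \<in> H}" using Hadd[OF Hneg[OF d] \<open>b \<in> H\<close>]
        by (auto intro!: exI[of _ "- (x - z) + b"])
    qed
  qed
  define rep where "rep = (\<lambda>c. SOME x. x \<in> G \<and> c = cs x)"
  have rep: "rep c \<in> G \<and> c = cs (rep c)" if "c \<in> C" for c
  proof -
    from that obtain x where "x \<in> G" "c = cs x" by (auto simp: C_def)
    then show ?thesis unfolding rep_def by (intro someI[where P="\<lambda>x. x \<in> G \<and> c = cs x"]) auto
  qed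
  define \<sigma> where "\<sigma> = (\<lambda>c. cs (rep c + y))"
  have \<sigma>C: "\<sigma> ` C \<subseteq> C"
  proof
    fix w assume "w \<in> \<sigma> ` C"
    then obtain c where c: "c \<in> C" "w = \<sigma> c" by auto
    then have "rep c + y \<in> G" using rep Gadd y by blast
    then show "w \<in> C" using c by (auto simp: \<sigma>_def C_def)
  qed
  have inj: "inj_on \<sigma> C"
  proof (rule inj_onI)
    fix c1 c2 assume c: "c1 \<in> C" "c2 \<in> C" "\<sigma> c1 = \<sigma> c2"
    then have "(rep c1 + y) - (rep c2 + y) \<in> H" using cs_eq unfolding \<sigma>_def by blast
    then have "cs (rep c1) = cs (rep c2)" by (intro eq_cs) simp
    then show "c1 = c2" using rep c by metis
  qed
  have fC: "finite C" using fin CC by simp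
  have im: "\<sigma> ` C = C" using endo_inj_surj[OF fC \<sigma>C inj] .
  have s1: "(\<Sum>c\<in>C. rep (\<sigma> c)) = (\<Sum>c\<in>C. rep c)"
    using sum.reindex[OF inj, of rep] im by simp
  define d where "d = (\<lambda>c. rep (\<sigma> c) - (rep c + y))"
  have dH: "d c \<in> H" if "c \<in> C" for c
  proof -
    have "\<sigma> c \<in> C" using \<sigma>C that by auto
    then have "cs (rep (\<sigma> c)) = cs (rep c + y)" using rep by (metis \<sigma>_def)
    then show ?thesis unfolding d_def by (rule cs_eq)
  qed
  have sumH: "finite A \<Longrightarrow> A \<subseteq> C \<Longrightarrow> (\<Sum>c\<in>A. d c) \<in> H" for A
    by (induction A rule: finite_induct) (auto intro: Hadd dH H0)
  have "(\<Sum>c\<in>C. d c) = (\<Sum>c\<in>C. rep (\<sigma> c)) - (\<Sum>c\<in>C. rep c) - (\<Sum>c\<in>C. y)"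
    by (simp add: d_def sum_subtractf sum.distrib)
  also have "\<dots> = - (of_nat (card C) * y)" using s1 by simp
  finally have "- (of_nat (card C) * y) \<in> H" using sumH[OF fC subset_refl] by simp
  from Hneg[OF this] show ?thesis unfolding CC by simp
qed



lemma add_e_eq: "add_e x y = x + y" by (simp add: add_e_def fun_eq_iff)
lemma mul_e_eq: "mul_e x y = x * y" by (simp add: mul_e_def fun_eq_iff)
lemma neg_e_eq: "neg_e x = - x" by (simp add: neg_e_def fun_eq_iff)
lemma zero_eq: "(\<lambda>i. 0) = (0 :: nat \<Rightarrow> complex)" by (simp add: fun_eq_iff)

lemma nf_ints:
  assumes "number_field F" shows "of_int c \<in> F"
proof -
  have cl: "0 \<in> F" "1 \<in> F" "\<And>x y. x \<in> F \<Longrightarrow> y \<in> F \<Longrightarrow> x + y \<in> F \<and> x - y \<in> F"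
    using assms unfolding number_field_def by auto
  have nat: "of_nat n \<in> F" for n
    by (induction n) (use cl in \<open>auto simp: add.commute\<close>)
  show ?thesis
  proof (cases "c \<ge> 0")
    case True then show ?thesis using nat[of "nat c"] by simp
  next
    case False
    then have "of_int c = 0 - of_nat (nat (- c))" by simp
    then show ?thesis using cl nat by metis
  qed
qed

theorem lemma2p1:
  fixes s :: nat and K :: "nat \<Rightarrow> complex set"
    and R R' :: "(nat \<Rightarrow> complex) set" and p :: nat
  assumes "\<forall>i<s. number_field (K i)"
    and "is_order s K R" and "is_order s K R'" and "R' \<subseteq> R"
  shows "conductor s K R' \<subseteq> conductor s K R \<and>
         (prime p \<and> p dvd ideal_norm s K (conductor s K R) \<and> \<not> p dvd index R R'
           \<longrightarrow> (\<forall>\<^sub>F n in sequentially.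
                 ppart_approx s K (conductor s K R') p n = ppart_approx s K (conductor s K R) p n))"
proof -
  note nf = assms(1)
  define Ok where "Ok = max_order s K"
  have Kadd: "x + y \<in> K i" if "i < s" "x \<in> K i" "y \<in> K i" for i x y
    using nf that unfolding number_field_def by blast
  have Kint: "of_int c \<in> K i" if "i < s" for i c using nf_ints nf that by blast
  define cst where "cst = (\<lambda>c::int. \<lambda>i. if i < s then (of_int c :: complex) else 0)"
  have O_add: "y + z \<in> Ok" if "y \<in> Ok" "z \<in> Ok" for y z
    using that Kadd algebraic_int_add_c by (auto simp: Ok_def max_order_def etale_def)
  have O_zero: "\<And>i. i \<ge> s \<Longrightarrow> y \<in> Ok \<Longrightarrow> y i = 0" for y
    by (auto simp: Ok_def max_order_def etale_def)
  have cst_O: "cst c \<in> Ok" for c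
    using Kint by (auto simp: Ok_def max_order_def etale_def cst_def)
  have fI: "I \<subseteq> Ok" "0 \<in> I" "\<And>x y. x \<in> I \<Longrightarrow> y \<in> I \<Longrightarrow> x + y \<in> I" "\<And>x. x \<in> I \<Longrightarrow> - x \<in> I"
     "\<And>x r. x \<in> I \<Longrightarrow> r \<in> Ok \<Longrightarrow> r * x \<in> I" if "Ok_ideal s K I" for I
    using that unfolding Ok_ideal_def Ok_def add_e_eq neg_e_eq mul_e_eq zero_eq by auto
  have fR: "Q \<subseteq> Ok" "\<And>x y. x \<in> Q \<Longrightarrow> y \<in> Q \<Longrightarrow> x + y \<in> Q" "\<And>x. x \<in> Q \<Longrightarrow> - x \<in> Q"
     "0 \<in> Q"  "finite (cosets Ok Q)" if "is_order s K Q" for Q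
  proof -
    show "Q \<subseteq> Ok" "\<And>x y. x \<in> Q \<Longrightarrow> y \<in> Q \<Longrightarrow> x + y \<in> Q" "\<And>x. x \<in> Q \<Longrightarrow> - x \<in> Q"
      "finite (cosets Ok Q)"
      using that unfolding is_order_def Ok_def add_e_eq neg_e_eq by auto
    have "one_e s \<in> Q" using that unfolding is_order_def by auto
    then show "0 \<in> Q" using that unfolding is_order_def add_e_eq neg_e_eq
      by (metis right_minus)
  qed
  have cond: "x \<in> conductor s K Q \<longleftrightarrow> (\<exists>I. Ok_ideal s K I \<and> I \<subseteq> Q \<and> x \<in> I)" for Q x
    unfolding conductor_def by blast
  have part1: "conductor s K R' \<subseteq> conductor s K R"
    using assms(4) unfolding conductor_def by blast
  have part2: "ppart_approx s K (conductor s K R') p n = ppart_approx s K (conductor s K R) p n"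
    if pr: "prime p" and ndvd: "\<not> p dvd index R R'" for n
  proof -
    define m where "m = index R R'"
    have m0: "m \<noteq> 0" using ndvd unfolding m_def by (metis dvd_0_right)
    have finC: "finite (cosets R R')" using m0 card.infinite unfolding m_def index_def by metis
    have key: "of_nat m * u \<in> R'" if "u \<in> R" for u
    proof -
      have "of_nat (card {{x + b | b. b \<in> R'} | x. x \<in> R}) * u \<in> R'"
        using fR[OF assms(3)] fR[OF assms(2)] assms(4) finC that
        by (intro coset_index_mult) (auto simp: cosets_def add_e_eq)
      then show ?thesis by (simp add: m_def index_def cosets_def add_e_eq)
    qed
    have "coprime (int m) (int p ^ n)"
      using pr ndvd unfolding m_def
      by (metis coprime_commute coprime_power_right_iff prime_imp_coprime of_nat_dvd_iff
          prime_nat_int_transfer coprime_int_iff)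
    then obtain a b where ab: "a * int m + b * int p ^ n = 1"
      using bezout_int[of "int m" "int p ^ n"] by auto
    show ?thesis
    proof (intro subset_antisym)
      show "ppart_approx s K (conductor s K R') p n \<subseteq> ppart_approx s K (conductor s K R) p n"
        using part1 unfolding ppart_approx_def by blast
    next
      show "ppart_approx s K (conductor s K R) p n \<subseteq> ppart_approx s K (conductor s K R') p n"
      proof
        fix z assume "z \<in> ppart_approx s K (conductor s K R) p n"
        then obtain x y where z: "z = x + (\<lambda>i. of_nat (p ^ n) * y i)" and x: "x \<in> conductor s K R"
          and y: "y \<in> Ok"
          unfolding ppart_approx_def add_e_eq Ok_def by blast
        from x obtain I where I: "Ok_ideal s K I" "I \<subseteq> R" "x \<in> I" using cond by blast
        note II = fI[OF I(1)]
        define J where "J = {cst (int m) * u | u. u \<in> I}"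
        have Jeq: "cst (int m) * u = of_nat m * u" if "u \<in> I" for u
          using O_zero II(1) that by (auto simp: fun_eq_iff cst_def)
        have "Ok_ideal s K J"
          unfolding Ok_ideal_def Ok_def[symmetric] add_e_eq neg_e_eq mul_e_eq zero_eq
        proof (intro conjI ballI)
          show "J \<subseteq> Ok" using II cst_O by (auto simp: J_def)
          show "0 \<in> J" using II unfolding J_def by (auto intro!: exI[of _ 0])
          fix u assume "u \<in> J"
          then obtain u' where u: "u = cst (int m) * u'" "u' \<in> I" by (auto simp: J_def)
          show "- u \<in> J" using u II unfolding J_def by (auto intro!: exI[of _ "- u'"])
          { fix w assume "w \<in> J"
            then obtain w' where w: "w = cst (int m) * w'" "w' \<in> I" by (auto simp: J_def)
            show "u + w \<in> J" using u w II unfolding J_def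
              by (auto intro!: exI[of _ "u' + w'"] simp: distrib_left) }
          { fix r assume "r \<in> Ok"
            show "r * u \<in> J" using u II \<open>r \<in> Ok\<close> unfolding J_def
              by (auto intro!: exI[of _ "r * u'"] simp: mult.left_commute) }
        qed
        moreover have "J \<subseteq> R'" using Jeq key I(2) by (auto simp: J_def)
        ultimately have Jc: "J \<subseteq> conductor s K R'" using cond by blast
        define x' where "x' = cst (int m) * (cst a * x)"
        define y' where "y' = cst b * x + y"
        have "cst a * x \<in> I" using II(5)[OF I(3) cst_O] .
        then have x': "x' \<in> conductor s K R'" using Jc unfolding x'_def J_def by blast
        have "cst b * x \<in> I" using II(5)[OF I(3) cst_O] .
        then have "cst b * x \<in> Ok" using II(1) by blast
        then have y': "y' \<in> Ok" unfolding y'_def using y O_add by blast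
        have "z = x' + (\<lambda>i. of_nat (p ^ n) * y' i)"
        proof
          fix i
          show "z i = (x' + (\<lambda>i. of_nat (p ^ n) * y' i)) i"
          proof (cases "i < s")
            case True
            have "x i = of_int (a * int m + b * int p ^ n) * x i" using ab by simp
            then show ?thesis using True unfolding z x'_def y'_def cst_def
              by (simp add: algebra_simps)
          next
            case False
            then show ?thesis using O_zero[of i x] O_zero[of i y] II(1) I(3) y
              unfolding z x'_def y'_def cst_def by auto
          qed
        qed
        then show "z \<in> ppart_approx s K (conductor s K R') p n"
          using x' y' unfolding ppart_approx_def add_e_eq Ok_def by blast
      qed
    qed
  qed
  show ?thesis using part1 part2 by (auto intro: always_eventually)
qed

end
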